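(* Let $\mathcal{F}:(\mathcal{K},c)\to(\mathcal{K}',c')$ be a bilax functor with compatible Yang–Baxter operator. For every object $A$ of $\mathcal{K}$, the functor $\mathcal{F}_{A,A}:\mathcal{K}(A,A)\to\mathcal{K}'(\mathcal{F}(A),\mathcal{F}(A))$ factors through the category of Hopf bimodules over the $c'$-bimonad $B:=\mathcal{F}(\mathrm{id}_A)$ in $(\mathcal{K}'(\mathcal{F}(A),\mathcal{F}(A)),c')$: for every 1-endocell $x$ of $A$, $\mathcal{F}(x)$ with the structures below is a Hopf bimodule over $B$, and for every 2-cell $\alpha:x\Rightarrow y$ in $\mathcal{K}(A,A)$, $\mathcal{F}(\alpha)$ is a morphism of Hopf bimodules.
   Context: Conventions: $\circ$ horizontal composition, $\cdot$ vertical composition ($\beta\cdot\alpha$: first $\alpha$), $1$ identity 2-cells. A Yang–Baxter operator $c$ of a 2-category: natural 2-cells $c_{g,f}:g\circ f\Rightarrow f\circ g$ for 1-endocells of a common object, satisfying the Yang–Baxter equation and $c_{\mathrm{id},f}=c_{f,\mathrm{id}}=1$. A bilax functor $\mathcal{F}:(\mathcal{K},c)\to(\mathcal{K}',c')$ with compatible Yang–Baxter operator is a lax functor ($\mathcal{F}^2_{g,f}:\mathcal{F}(g)\circ\mathcal{F}(f)\Rightarrow\mathcal{F}(gf)$, $\mathcal{F}^0_A:\mathrm{id}\Rightarrow\mathcal{F}(\mathrm{id}_A)$) and colax functor ($\mathcal{F}_{2;g,f}:\mathcal{F}(gf)\Rightarrow\mathcal{F}(g)\circ\mathcal{F}(f)$,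 $\mathcal{F}_{0;A}$) such that $\nu_{g,f}:=c'_{\mathcal{F}(g),\mathcal{F}(f)}$ is a left and right distributive law for the lax and colax structures (e.g. $\nu_{hg,f}\cdot(\mathcal{F}^2_{h,g}\circ1)=(1\circ\mathcal{F}^2_{h,g})\cdot(\nu_{h,f}\circ1)\cdot(1\circ\nu_{g,f})$, $\nu_{\mathrm{id},f}\cdot(\mathcal{F}^0\circ1)=1\circ\mathcal{F}^0$, $(\mathcal{F}_{2;h,g}\circ1)\cdot\nu_{f,hg}=(1\circ\nu_{f,g})\cdot(\nu_{f,h}\circ1)\cdot(1\circ\mathcal{F}_{2;h,g})$, $(\mathcal{F}_0\circ1)\cdot\nu_{f,\mathrm{id}}=1\circ\mathcal{F}_0$, and mirror images), satisfies $(1\circ\mathcal{F}_0)\cdot\nu_{\mathrm{id},f}\cdot(\mathcal{F}^0\circ1)=1=(\mathcal{F}_0\circ1)\cdot\nu_{f,\mathrm{id}}\cdot(1\circ\mathcal{F}^0)$, and the bilaxity conditions $(\mathcal{F}^2_{g,h}\circ\mathcal{F}^2_{f,k})\cdot(1\circ\nu_{f,h}\circ1)\cdot(\mathcal{F}_{2;g,f}\circ\mathcal{F}_{2;h,k})=\mathcal{F}_{2;gh,fk}\cdot\mathcal{F}(1\circ c_{f,h}\circ1)\cdot\mathcal{F}^2_{gf,hk}$ for $A\xrightarrow{k}B\xrightarrow{h}B\xrightarrow{f}B\xrightarrow{g}C$, $\mathcal{F}^0\circ\mathcal{F}^0=\mathcal{F}_{2;\mathrm{id},\mathrm{id}}\cdot\mathcal{F}^0$,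 $\mathcal{F}_0\circ\mathcal{F}_0=\mathcal{F}_0\cdot\mathcal{F}^2_{\mathrm{id},\mathrm{id}}$, $\mathcal{F}_0\cdot\mathcal{F}^0=1$. $B=\mathcal{F}(\mathrm{id}_A)$ is a $c'$-bimonad with $\mu=\mathcal{F}^2_{\mathrm{id},\mathrm{id}}$, $\eta=\mathcal{F}^0_A$, $\Delta=\mathcal{F}_{2;\mathrm{id},\mathrm{id}}$, $\varepsilon=\mathcal{F}_{0;A}$. For a 1-endocell $x$ of $A$, $\mathcal{F}(x)$ has left action $\rhd=\mathcal{F}^2_{\mathrm{id},x}:B\circ\mathcal{F}(x)\Rightarrow\mathcal{F}(x)$, right action $\lhd=\mathcal{F}^2_{x,\mathrm{id}}$, left coaction $\lambda=\mathcal{F}_{2;\mathrm{id},x}:\mathcal{F}(x)\Rightarrow B\circ\mathcal{F}(x)$ and right coaction $\rho=\mathcal{F}_{2;x,\mathrm{id}}$. In the monoidal category $(\mathcal{K}'(\mathcal{F}(A),\mathcal{F}(A)),\circ)$ with Yang–Baxter operator $c'$ and $c'$-bimonad $B$, a Hopf bimodule over $B$ is an object $M$ that is a $B$-bimodule ($\rhd,\lhd$, associative, unital, commuting actions) and a $B$-bicomodule ($\lambda,\rho$, coassociative, counital, commuting coactions) satisfying the four conditions $\lambda\cdot\rhd=(\mu\circ\rhd)\cdot(1\circ c'_{B,B}\circ1)\cdot(\Delta\circ\lambda)$, $\rho\cdot\lhd=(\lhd\circ\mu)\cdot(1\circ c'_{B,B}\circ1)\cdot(\rho\circ\Delta)$,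 $\lambda\cdot\lhd=(\mu\circ\lhd)\cdot(1\circ c'_{M,B}\circ1)\cdot(\lambda\circ\Delta)$, $\rho\cdot\rhd=(\rhd\circ\mu)\cdot(1\circ c'_{B,M}\circ1)\cdot(\Delta\circ\rho)$; morphisms of Hopf bimodules are 2-cells that are left and right $B$-linear and left and right $B$-colinear. *)

theory Defs
  imports Main
begin

text \<open>A (strict) 2-category, given by its objects, hom-sets of 1-cells Hom1 A B
  (1-cells A to B), hom-sets of 2-cells Hom2 f g (2-cells f to g), identities,
  composition of 1-cells (Comp1 g f = g after f), vertical composition
  (VComp b a = b after a) and horizontal composition (HComp b a = b o a).\<close>

record ('o,'a,'c) twocat =
  Ob    :: "'o set"
  Hom1  :: "'o \<Rightarrow> 'o \<Rightarrow> 'a set"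
  Hom2  :: "'a \<Rightarrow> 'a \<Rightarrow> 'c set"
  Id1   :: "'o \<Rightarrow> 'a"
  Comp1 :: "'a \<Rightarrow> 'a \<Rightarrow> 'a"
  Id2   :: "'a \<Rightarrow> 'c"
  VComp :: "'c \<Rightarrow> 'c \<Rightarrow> 'c"
  HComp :: "'c \<Rightarrow> 'c \<Rightarrow> 'c"

definition two_category :: "('o,'a,'c) twocat \<Rightarrow> bool" where
  "two_category K \<longleftrightarrow>
    (\<forall>A B. Hom1 K A B \<noteq> {} \<longrightarrow> A \<in> Ob K \<and> B \<in> Ob K) \<and>
    (\<forall>A B A' B' f. f \<in> Hom1 K A B \<longrightarrow> f \<in> Hom1 K A' B' \<longrightarrow> A = A' \<and> B = B') \<and>
    (\<forall>A \<in> Ob K. Id1 K A \<in> Hom1 K A A) \<and>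
    (\<forall>A B C f g. f \<in> Hom1 K A B \<longrightarrow> g \<in> Hom1 K B C \<longrightarrow> Comp1 K g f \<in> Hom1 K A C) \<and>
    (\<forall>A B C D f g h. f \<in> Hom1 K A B \<longrightarrow> g \<in> Hom1 K B C \<longrightarrow> h \<in> Hom1 K C D \<longrightarrow>
        Comp1 K h (Comp1 K g f) = Comp1 K (Comp1 K h g) f) \<and>
    (\<forall>A B f. f \<in> Hom1 K A B \<longrightarrow> Comp1 K f (Id1 K A) = f \<and> Comp1 K (Id1 K B) f = f) \<and>
    (\<forall>f g. Hom2 K f g \<noteq> {} \<longrightarrow> (\<exists>A B. f \<in> Hom1 K A B \<and> g \<in> Hom1 K A B)) \<and>
    (\<forall>f g f' g' \<alpha>. \<alpha> \<in> Hom2 K f g \<longrightarrow> \<alpha> \<in> Hom2 K f' g' \<longrightarrow> f = f' \<and> g = g') \<and>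
    (\<forall>A B f. f \<in> Hom1 K A B \<longrightarrow> Id2 K f \<in> Hom2 K f f) \<and>
    (\<forall>f g h \<alpha> \<beta>. \<alpha> \<in> Hom2 K f g \<longrightarrow> \<beta> \<in> Hom2 K g h \<longrightarrow> VComp K \<beta> \<alpha> \<in> Hom2 K f h) \<and>
    (\<forall>f g h k \<alpha> \<beta> \<gamma>. \<alpha> \<in> Hom2 K f g \<longrightarrow> \<beta> \<in> Hom2 K g h \<longrightarrow> \<gamma> \<in> Hom2 K h k \<longrightarrow>
        VComp K \<gamma> (VComp K \<beta> \<alpha>) = VComp K (VComp K \<gamma> \<beta>) \<alpha>) \<and>
    (\<forall>f g \<alpha>. \<alpha> \<in> Hom2 K f g \<longrightarrow> VComp K (Id2 K g) \<alpha> = \<alpha> \<and> VComp K \<alpha> (Id2 K f) = \<alpha>) \<and>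
    (\<forall>A B C f g f' g' \<alpha> \<beta>. f \<in> Hom1 K A B \<longrightarrow> f' \<in> Hom1 K B C \<longrightarrow>
        \<alpha> \<in> Hom2 K f g \<longrightarrow> \<beta> \<in> Hom2 K f' g' \<longrightarrow>
        HComp K \<beta> \<alpha> \<in> Hom2 K (Comp1 K f' f) (Comp1 K g' g)) \<and>
    (\<forall>A B C D f g f' g' f'' g'' \<alpha> \<beta> \<gamma>. f \<in> Hom1 K A B \<longrightarrow> f' \<in> Hom1 K B C \<longrightarrow>
        f'' \<in> Hom1 K C D \<longrightarrow> \<alpha> \<in> Hom2 K f g \<longrightarrow> \<beta> \<in> Hom2 K f' g' \<longrightarrow> \<gamma> \<in> Hom2 K f'' g'' \<longrightarrow>
        HComp K \<gamma> (HComp K \<beta> \<alpha>) = HComp K (HComp K \<gamma> \<beta>) \<alpha>) \<and>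
    (\<forall>A B f g \<alpha>. f \<in> Hom1 K A B \<longrightarrow> \<alpha> \<in> Hom2 K f g \<longrightarrow>
        HComp K \<alpha> (Id2 K (Id1 K A)) = \<alpha> \<and> HComp K (Id2 K (Id1 K B)) \<alpha> = \<alpha>) \<and>
    (\<forall>A B C f g. f \<in> Hom1 K A B \<longrightarrow> g \<in> Hom1 K B C \<longrightarrow>
        HComp K (Id2 K g) (Id2 K f) = Id2 K (Comp1 K g f)) \<and>
    (\<forall>A B C f g h f' g' h' \<alpha> \<alpha>' \<beta> \<beta>'. f \<in> Hom1 K A B \<longrightarrow> f' \<in> Hom1 K B C \<longrightarrow>
        \<alpha> \<in> Hom2 K f g \<longrightarrow> \<alpha>' \<in> Hom2 K g h \<longrightarrow> \<beta> \<in> Hom2 K f' g' \<longrightarrow> \<beta>' \<in> Hom2 K g' h' \<longrightarrow>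
        HComp K (VComp K \<beta>' \<beta>) (VComp K \<alpha>' \<alpha>) = VComp K (HComp K \<beta>' \<alpha>') (HComp K \<beta> \<alpha>))"

definition yb_operator :: "('o,'a,'c) twocat \<Rightarrow> ('a \<Rightarrow> 'a \<Rightarrow> 'c) \<Rightarrow> bool" where
  "yb_operator K c \<longleftrightarrow>
    (\<forall>A \<in> Ob K. \<forall>f \<in> Hom1 K A A. \<forall>g \<in> Hom1 K A A.
        c g f \<in> Hom2 K (Comp1 K g f) (Comp1 K f g)) \<and>
    (\<forall>A \<in> Ob K. \<forall>f \<in> Hom1 K A A. \<forall>f' \<in> Hom1 K A A. \<forall>g \<in> Hom1 K A A. \<forall>g' \<in> Hom1 K A A.
      \<forall>\<alpha> \<in> Hom2 K f f'. \<forall>\<beta> \<in> Hom2 K g g'.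
        VComp K (c g' f') (HComp K \<beta> \<alpha>) = VComp K (HComp K \<alpha> \<beta>) (c g f)) \<and>
    (\<forall>A \<in> Ob K. \<forall>f \<in> Hom1 K A A. \<forall>g \<in> Hom1 K A A. \<forall>h \<in> Hom1 K A A.
        VComp K (HComp K (c g f) (Id2 K h))
          (VComp K (HComp K (Id2 K g) (c h f)) (HComp K (c h g) (Id2 K f)))
      = VComp K (HComp K (Id2 K f) (c h g))
          (VComp K (HComp K (c h f) (Id2 K g)) (HComp K (Id2 K h) (c g f)))) \<and>
    (\<forall>A \<in> Ob K. \<forall>f \<in> Hom1 K A A. c (Id1 K A) f = Id2 K f \<and> c f (Id1 K A) = Id2 K f)"

definition lax_functor ::
  "('o,'a,'c) twocat \<Rightarrow> ('p,'b,'d) twocat \<Rightarrow> ('o \<Rightarrow> 'p) \<Rightarrow> ('a \<Rightarrow> 'b) \<Rightarrow> ('c \<Rightarrow> 'd)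
   \<Rightarrow> ('a \<Rightarrow> 'a \<Rightarrow> 'd) \<Rightarrow> ('o \<Rightarrow> 'd) \<Rightarrow> bool" where
  "lax_functor K K' Fo Fa Fc L2 L0 \<longleftrightarrow>
    (\<forall>A \<in> Ob K. Fo A \<in> Ob K') \<and>
    (\<forall>A B f. f \<in> Hom1 K A B \<longrightarrow> Fa f \<in> Hom1 K' (Fo A) (Fo B)) \<and>
    (\<forall>f g \<alpha>. \<alpha> \<in> Hom2 K f g \<longrightarrow> Fc \<alpha> \<in> Hom2 K' (Fa f) (Fa g)) \<and>
    (\<forall>A B f. f \<in> Hom1 K A B \<longrightarrow> Fc (Id2 K f) = Id2 K' (Fa f)) \<and>
    (\<forall>f g h \<alpha> \<beta>. \<alpha> \<in> Hom2 K f g \<longrightarrow> \<beta> \<in> Hom2 K g h \<longrightarrow>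
        Fc (VComp K \<beta> \<alpha>) = VComp K' (Fc \<beta>) (Fc \<alpha>)) \<and>
    (\<forall>A B C f g. f \<in> Hom1 K A B \<longrightarrow> g \<in> Hom1 K B C \<longrightarrow>
        L2 g f \<in> Hom2 K' (Comp1 K' (Fa g) (Fa f)) (Fa (Comp1 K g f))) \<and>
    (\<forall>A \<in> Ob K. L0 A \<in> Hom2 K' (Id1 K' (Fo A)) (Fa (Id1 K A))) \<and>
    (\<forall>A B C f f' g g' \<alpha> \<beta>. f \<in> Hom1 K A B \<longrightarrow> g \<in> Hom1 K B C \<longrightarrow>
        \<alpha> \<in> Hom2 K f f' \<longrightarrow> \<beta> \<in> Hom2 K g g' \<longrightarrow>
        VComp K' (L2 g' f') (HComp K' (Fc \<beta>) (Fc \<alpha>)) = VComp K' (Fc (HComp K \<beta> \<alpha>)) (L2 g f)) \<and>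
    (\<forall>A B C D f g h. f \<in> Hom1 K A B \<longrightarrow> g \<in> Hom1 K B C \<longrightarrow> h \<in> Hom1 K C D \<longrightarrow>
        VComp K' (L2 h (Comp1 K g f)) (HComp K' (Id2 K' (Fa h)) (L2 g f))
      = VComp K' (L2 (Comp1 K h g) f) (HComp K' (L2 h g) (Id2 K' (Fa f)))) \<and>
    (\<forall>A B f. f \<in> Hom1 K A B \<longrightarrow>
        VComp K' (L2 f (Id1 K A)) (HComp K' (Id2 K' (Fa f)) (L0 A)) = Id2 K' (Fa f) \<and>
        VComp K' (L2 (Id1 K B) f) (HComp K' (L0 B) (Id2 K' (Fa f))) = Id2 K' (Fa f))"

definition colax_functor ::
  "('o,'a,'c) twocat \<Rightarrow> ('p,'b,'d) twocat \<Rightarrow> ('o \<Rightarrow> 'p) \<Rightarrow> ('a \<Rightarrow> 'b) \<Rightarrow> ('c \<Rightarrow> 'd)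
   \<Rightarrow> ('a \<Rightarrow> 'a \<Rightarrow> 'd) \<Rightarrow> ('o \<Rightarrow> 'd) \<Rightarrow> bool" where
  "colax_functor K K' Fo Fa Fc C2 C0 \<longleftrightarrow>
    (\<forall>A \<in> Ob K. Fo A \<in> Ob K') \<and>
    (\<forall>A B f. f \<in> Hom1 K A B \<longrightarrow> Fa f \<in> Hom1 K' (Fo A) (Fo B)) \<and>
    (\<forall>f g \<alpha>. \<alpha> \<in> Hom2 K f g \<longrightarrow> Fc \<alpha> \<in> Hom2 K' (Fa f) (Fa g)) \<and>
    (\<forall>A B f. f \<in> Hom1 K A B \<longrightarrow> Fc (Id2 K f) = Id2 K' (Fa f)) \<and>
    (\<forall>f g h \<alpha> \<beta>. \<alpha> \<in> Hom2 K f g \<longrightarrow> \<beta> \<in> Hom2 K g h \<longrightarrow>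
        Fc (VComp K \<beta> \<alpha>) = VComp K' (Fc \<beta>) (Fc \<alpha>)) \<and>
    (\<forall>A B C f g. f \<in> Hom1 K A B \<longrightarrow> g \<in> Hom1 K B C \<longrightarrow>
        C2 g f \<in> Hom2 K' (Fa (Comp1 K g f)) (Comp1 K' (Fa g) (Fa f))) \<and>
    (\<forall>A \<in> Ob K. C0 A \<in> Hom2 K' (Fa (Id1 K A)) (Id1 K' (Fo A))) \<and>
    (\<forall>A B C f f' g g' \<alpha> \<beta>. f \<in> Hom1 K A B \<longrightarrow> g \<in> Hom1 K B C \<longrightarrow>
        \<alpha> \<in> Hom2 K f f' \<longrightarrow> \<beta> \<in> Hom2 K g g' \<longrightarrow>
        VComp K' (HComp K' (Fc \<beta>) (Fc \<alpha>)) (C2 g f) = VComp K' (C2 g' f') (Fc (HComp K \<beta> \<alpha>))) \<and>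
    (\<forall>A B C D f g h. f \<in> Hom1 K A B \<longrightarrow> g \<in> Hom1 K B C \<longrightarrow> h \<in> Hom1 K C D \<longrightarrow>
        VComp K' (HComp K' (Id2 K' (Fa h)) (C2 g f)) (C2 h (Comp1 K g f))
      = VComp K' (HComp K' (C2 h g) (Id2 K' (Fa f))) (C2 (Comp1 K h g) f)) \<and>
    (\<forall>A B f. f \<in> Hom1 K A B \<longrightarrow>
        VComp K' (HComp K' (Id2 K' (Fa f)) (C0 A)) (C2 f (Id1 K A)) = Id2 K' (Fa f) \<and>
        VComp K' (HComp K' (C0 B) (Id2 K' (Fa f))) (C2 (Id1 K B) f) = Id2 K' (Fa f))"

text \<open>nu g f := c' (Fa g) (Fa f), for 1-endocells g, f of a common object.\<close>

definition bilax_functor_yb ::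
  "('o,'a,'c) twocat \<Rightarrow> ('a \<Rightarrow> 'a \<Rightarrow> 'c) \<Rightarrow> ('p,'b,'d) twocat \<Rightarrow> ('b \<Rightarrow> 'b \<Rightarrow> 'd)
   \<Rightarrow> ('o \<Rightarrow> 'p) \<Rightarrow> ('a \<Rightarrow> 'b) \<Rightarrow> ('c \<Rightarrow> 'd)
   \<Rightarrow> ('a \<Rightarrow> 'a \<Rightarrow> 'd) \<Rightarrow> ('o \<Rightarrow> 'd) \<Rightarrow> ('a \<Rightarrow> 'a \<Rightarrow> 'd) \<Rightarrow> ('o \<Rightarrow> 'd) \<Rightarrow> bool" where
  "bilax_functor_yb K c K' c' Fo Fa Fc L2 L0 C2 C0 \<longleftrightarrow>
    two_category K \<and> two_category K' \<and> yb_operator K c \<and> yb_operator K' c' \<and>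
    lax_functor K K' Fo Fa Fc L2 L0 \<and> colax_functor K K' Fo Fa Fc C2 C0 \<and>
    \<comment> \<open>nu is a left and right distributive law for the lax structure\<close>
    (\<forall>A \<in> Ob K. \<forall>f \<in> Hom1 K A A. \<forall>g \<in> Hom1 K A A. \<forall>h \<in> Hom1 K A A.
        VComp K' (c' (Fa (Comp1 K h g)) (Fa f)) (HComp K' (L2 h g) (Id2 K' (Fa f)))
      = VComp K' (HComp K' (Id2 K' (Fa f)) (L2 h g))
          (VComp K' (HComp K' (c' (Fa h) (Fa f)) (Id2 K' (Fa g)))
                    (HComp K' (Id2 K' (Fa h)) (c' (Fa g) (Fa f))))) \<and>
    (\<forall>A \<in> Ob K. \<forall>f \<in> Hom1 K A A. \<forall>g \<in> Hom1 K A A. \<forall>h \<in> Hom1 K A A.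
        VComp K' (c' (Fa f) (Fa (Comp1 K h g))) (HComp K' (Id2 K' (Fa f)) (L2 h g))
      = VComp K' (HComp K' (L2 h g) (Id2 K' (Fa f)))
          (VComp K' (HComp K' (Id2 K' (Fa h)) (c' (Fa f) (Fa g)))
                    (HComp K' (c' (Fa f) (Fa h)) (Id2 K' (Fa g))))) \<and>
    (\<forall>A \<in> Ob K. \<forall>f \<in> Hom1 K A A.
        VComp K' (c' (Fa (Id1 K A)) (Fa f)) (HComp K' (L0 A) (Id2 K' (Fa f)))
          = HComp K' (Id2 K' (Fa f)) (L0 A) \<and>
        VComp K' (c' (Fa f) (Fa (Id1 K A))) (HComp K' (Id2 K' (Fa f)) (L0 A))
          = HComp K' (L0 A) (Id2 K' (Fa f))) \<and>
    \<comment> \<open>nu is a left and right distributive law for the colax structure\<close>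
    (\<forall>A \<in> Ob K. \<forall>f \<in> Hom1 K A A. \<forall>g \<in> Hom1 K A A. \<forall>h \<in> Hom1 K A A.
        VComp K' (HComp K' (C2 h g) (Id2 K' (Fa f))) (c' (Fa f) (Fa (Comp1 K h g)))
      = VComp K' (HComp K' (Id2 K' (Fa h)) (c' (Fa f) (Fa g)))
          (VComp K' (HComp K' (c' (Fa f) (Fa h)) (Id2 K' (Fa g)))
                    (HComp K' (Id2 K' (Fa f)) (C2 h g)))) \<and>
    (\<forall>A \<in> Ob K. \<forall>f \<in> Hom1 K A A. \<forall>g \<in> Hom1 K A A. \<forall>h \<in> Hom1 K A A.
        VComp K' (HComp K' (Id2 K' (Fa f)) (C2 h g)) (c' (Fa (Comp1 K h g)) (Fa f))
      = VComp K' (HComp K' (c' (Fa h) (Fa f)) (Id2 K' (Fa g)))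
          (VComp K' (HComp K' (Id2 K' (Fa h)) (c' (Fa g) (Fa f)))
                    (HComp K' (C2 h g) (Id2 K' (Fa f))))) \<and>
    (\<forall>A \<in> Ob K. \<forall>f \<in> Hom1 K A A.
        VComp K' (HComp K' (C0 A) (Id2 K' (Fa f))) (c' (Fa f) (Fa (Id1 K A)))
          = HComp K' (Id2 K' (Fa f)) (C0 A) \<and>
        VComp K' (HComp K' (Id2 K' (Fa f)) (C0 A)) (c' (Fa (Id1 K A)) (Fa f))
          = HComp K' (C0 A) (Id2 K' (Fa f))) \<and>
    \<comment> \<open>compatibility of units and counits with nu\<close>
    (\<forall>A \<in> Ob K. \<forall>f \<in> Hom1 K A A.
        VComp K' (HComp K' (Id2 K' (Fa f)) (C0 A))
          (VComp K' (c' (Fa (Id1 K A)) (Fa f)) (HComp K' (L0 A) (Id2 K' (Fa f)))) = Id2 K' (Fa f) \<and>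
        VComp K' (HComp K' (C0 A) (Id2 K' (Fa f)))
          (VComp K' (c' (Fa f) (Fa (Id1 K A))) (HComp K' (Id2 K' (Fa f)) (L0 A))) = Id2 K' (Fa f)) \<and>
    \<comment> \<open>bilaxity\<close>
    (\<forall>A B C k h f g. k \<in> Hom1 K A B \<longrightarrow> h \<in> Hom1 K B B \<longrightarrow> f \<in> Hom1 K B B \<longrightarrow> g \<in> Hom1 K B C \<longrightarrow>
        VComp K' (HComp K' (L2 g h) (L2 f k))
          (VComp K' (HComp K' (HComp K' (Id2 K' (Fa g)) (c' (Fa f) (Fa h))) (Id2 K' (Fa k)))
                    (HComp K' (C2 g f) (C2 h k)))
      = VComp K' (C2 (Comp1 K g h) (Comp1 K f k))
          (VComp K' (Fc (HComp K (HComp K (Id2 K g) (c f h)) (Id2 K k)))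
                    (L2 (Comp1 K g f) (Comp1 K h k)))) \<and>
    (\<forall>A \<in> Ob K. HComp K' (L0 A) (L0 A) = VComp K' (C2 (Id1 K A) (Id1 K A)) (L0 A)) \<and>
    (\<forall>A \<in> Ob K. HComp K' (C0 A) (C0 A) = VComp K' (C0 A) (L2 (Id1 K A) (Id1 K A))) \<and>
    (\<forall>A \<in> Ob K. VComp K' (C0 A) (L0 A) = Id2 K' (Id1 K' (Fo A)))"

text \<open>Hopf bimodule M over (B, mu, eta, Delta, eps) in the monoidal category
  (K(X,X), o) with Yang--Baxter operator c; al, ar: left/right action,
  cl, cr: left/right coaction.\<close>

definition hopf_bimodule ::
  "('p,'b,'d) twocat \<Rightarrow> ('b \<Rightarrow> 'b \<Rightarrow> 'd) \<Rightarrow> 'p \<Rightarrow> 'b \<Rightarrow> 'd \<Rightarrow> 'd \<Rightarrow> 'd \<Rightarrow> 'd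
   \<Rightarrow> 'b \<Rightarrow> 'd \<Rightarrow> 'd \<Rightarrow> 'd \<Rightarrow> 'd \<Rightarrow> bool" where
  "hopf_bimodule K c X B mu eta Del eps M al ar cl cr \<longleftrightarrow>
    M \<in> Hom1 K X X \<and>
    al \<in> Hom2 K (Comp1 K B M) M \<and> ar \<in> Hom2 K (Comp1 K M B) M \<and>
    cl \<in> Hom2 K M (Comp1 K B M) \<and> cr \<in> Hom2 K M (Comp1 K M B) \<and>
    \<comment> \<open>bimodule\<close>
    VComp K al (HComp K mu (Id2 K M)) = VComp K al (HComp K (Id2 K B) al) \<and>
    VComp K al (HComp K eta (Id2 K M)) = Id2 K M \<and>
    VComp K ar (HComp K (Id2 K M) mu) = VComp K ar (HComp K ar (Id2 K B)) \<and>
    VComp K ar (HComp K (Id2 K M) eta) = Id2 K M \<and>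
    VComp K ar (HComp K al (Id2 K B)) = VComp K al (HComp K (Id2 K B) ar) \<and>
    \<comment> \<open>bicomodule\<close>
    VComp K (HComp K Del (Id2 K M)) cl = VComp K (HComp K (Id2 K B) cl) cl \<and>
    VComp K (HComp K eps (Id2 K M)) cl = Id2 K M \<and>
    VComp K (HComp K (Id2 K M) Del) cr = VComp K (HComp K cr (Id2 K B)) cr \<and>
    VComp K (HComp K (Id2 K M) eps) cr = Id2 K M \<and>
    VComp K (HComp K cl (Id2 K B)) cr = VComp K (HComp K (Id2 K B) cr) cl \<and>
    \<comment> \<open>Hopf compatibility conditions\<close>
    VComp K cl al = VComp K (HComp K mu al)
        (VComp K (HComp K (HComp K (Id2 K B) (c B B)) (Id2 K M)) (HComp K Del cl)) \<and>
    VComp K cr ar = VComp K (HComp K ar mu)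
        (VComp K (HComp K (HComp K (Id2 K M) (c B B)) (Id2 K B)) (HComp K cr Del)) \<and>
    VComp K cl ar = VComp K (HComp K mu ar)
        (VComp K (HComp K (HComp K (Id2 K B) (c M B)) (Id2 K B)) (HComp K cl Del)) \<and>
    VComp K cr al = VComp K (HComp K al mu)
        (VComp K (HComp K (HComp K (Id2 K B) (c B M)) (Id2 K B)) (HComp K Del cr))"

definition hopf_bimodule_morphism ::
  "('p,'b,'d) twocat \<Rightarrow> 'b \<Rightarrow> 'b \<Rightarrow> 'd \<Rightarrow> 'd \<Rightarrow> 'd \<Rightarrow> 'd
   \<Rightarrow> 'b \<Rightarrow> 'd \<Rightarrow> 'd \<Rightarrow> 'd \<Rightarrow> 'd \<Rightarrow> 'd \<Rightarrow> bool" where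
  "hopf_bimodule_morphism K B M al ar cl cr N al' ar' cl' cr' \<phi> \<longleftrightarrow>
    \<phi> \<in> Hom2 K M N \<and>
    VComp K \<phi> al = VComp K al' (HComp K (Id2 K B) \<phi>) \<and>
    VComp K \<phi> ar = VComp K ar' (HComp K \<phi> (Id2 K B)) \<and>
    VComp K cl' \<phi> = VComp K (HComp K (Id2 K B) \<phi>) cl \<and>
    VComp K cr' \<phi> = VComp K (HComp K \<phi> (Id2 K B)) cr"

end

theory Submission
  imports Defs
begin

lemma tc_id1: "two_category K \<Longrightarrow> A \<in> Ob K \<Longrightarrow> Id1 K A \<in> Hom1 K A A"
  unfolding two_category_def by (elim conjE) fast
lemma tc_runit: "two_category K \<Longrightarrow> f \<in> Hom1 K A B \<Longrightarrow> Comp1 K f (Id1 K A) = f"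
  unfolding two_category_def by (elim conjE) fast
lemma tc_lunit: "two_category K \<Longrightarrow> f \<in> Hom1 K A B \<Longrightarrow> Comp1 K (Id1 K B) f = f"
  unfolding two_category_def by (elim conjE) fast
lemma tc_comp1: "two_category K \<Longrightarrow> f \<in> Hom1 K A B \<Longrightarrow> g \<in> Hom1 K B C \<Longrightarrow> Comp1 K g f \<in> Hom1 K A C"
  unfolding two_category_def by (elim conjE) fast
lemma tc_id2: "two_category K \<Longrightarrow> f \<in> Hom1 K A B \<Longrightarrow> Id2 K f \<in> Hom2 K f f"
  unfolding two_category_def by (elim conjE) fast
lemma tc_vl: "two_category K \<Longrightarrow> \<alpha> \<in> Hom2 K f g \<Longrightarrow> VComp K (Id2 K g) \<alpha> = \<alpha>"
  unfolding two_category_def by (elim conjE) fast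
lemma tc_vr: "two_category K \<Longrightarrow> \<alpha> \<in> Hom2 K f g \<Longrightarrow> VComp K \<alpha> (Id2 K f) = \<alpha>"
  unfolding two_category_def by (elim conjE) fast
lemma tc_hr: "two_category K \<Longrightarrow> f \<in> Hom1 K A B \<Longrightarrow> \<alpha> \<in> Hom2 K f g \<Longrightarrow> HComp K \<alpha> (Id2 K (Id1 K A)) = \<alpha>"
  unfolding two_category_def by (elim conjE) fast
lemma tc_hl: "two_category K \<Longrightarrow> f \<in> Hom1 K A B \<Longrightarrow> \<alpha> \<in> Hom2 K f g \<Longrightarrow> HComp K (Id2 K (Id1 K B)) \<alpha> = \<alpha>"
  unfolding two_category_def by (elim conjE) fast
lemma tc_hid: "two_category K \<Longrightarrow> f \<in> Hom1 K A B \<Longrightarrow> g \<in> Hom1 K B C \<Longrightarrow> HComp K (Id2 K g) (Id2 K f) = Id2 K (Comp1 K g f)"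
  unfolding two_category_def by (elim conjE) fast

lemma yb_l: "yb_operator K c \<Longrightarrow> A \<in> Ob K \<Longrightarrow> f \<in> Hom1 K A A \<Longrightarrow> c (Id1 K A) f = Id2 K f"
  unfolding yb_operator_def by (elim conjE) fast
lemma yb_r: "yb_operator K c \<Longrightarrow> A \<in> Ob K \<Longrightarrow> f \<in> Hom1 K A A \<Longrightarrow> c f (Id1 K A) = Id2 K f"
  unfolding yb_operator_def by (elim conjE) fast

lemma lax_Fa: "lax_functor K K' Fo Fa Fc L2 L0 \<Longrightarrow> f \<in> Hom1 K A B \<Longrightarrow> Fa f \<in> Hom1 K' (Fo A) (Fo B)"
  unfolding lax_functor_def by (elim conjE) fast
lemma lax_Fc: "lax_functor K K' Fo Fa Fc L2 L0 \<Longrightarrow> \<alpha> \<in> Hom2 K f g \<Longrightarrow> Fc \<alpha> \<in> Hom2 K' (Fa f) (Fa g)"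
  unfolding lax_functor_def by (elim conjE) fast
lemma lax_Fid: "lax_functor K K' Fo Fa Fc L2 L0 \<Longrightarrow> f \<in> Hom1 K A B \<Longrightarrow> Fc (Id2 K f) = Id2 K' (Fa f)"
  unfolding lax_functor_def by (elim conjE) fast
lemma lax_L2: "lax_functor K K' Fo Fa Fc L2 L0 \<Longrightarrow> f \<in> Hom1 K A B \<Longrightarrow> g \<in> Hom1 K B C \<Longrightarrow>
        L2 g f \<in> Hom2 K' (Comp1 K' (Fa g) (Fa f)) (Fa (Comp1 K g f))"
  unfolding lax_functor_def by (elim conjE) fast
lemma lax_L0: "lax_functor K K' Fo Fa Fc L2 L0 \<Longrightarrow> A \<in> Ob K \<Longrightarrow> L0 A \<in> Hom2 K' (Id1 K' (Fo A)) (Fa (Id1 K A))"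
  unfolding lax_functor_def by (elim conjE) fast
lemma lax_nat: "lax_functor K K' Fo Fa Fc L2 L0 \<Longrightarrow> f \<in> Hom1 K A B \<Longrightarrow> g \<in> Hom1 K B C \<Longrightarrow>
        \<alpha> \<in> Hom2 K f f' \<Longrightarrow> \<beta> \<in> Hom2 K g g' \<Longrightarrow>
        VComp K' (L2 g' f') (HComp K' (Fc \<beta>) (Fc \<alpha>)) = VComp K' (Fc (HComp K \<beta> \<alpha>)) (L2 g f)"
  unfolding lax_functor_def by (elim conjE) fast
lemma lax_assoc: "lax_functor K K' Fo Fa Fc L2 L0 \<Longrightarrow> f \<in> Hom1 K A B \<Longrightarrow> g \<in> Hom1 K B C \<Longrightarrow> h \<in> Hom1 K C D \<Longrightarrow>
        VComp K' (L2 h (Comp1 K g f)) (HComp K' (Id2 K' (Fa h)) (L2 g f))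
      = VComp K' (L2 (Comp1 K h g) f) (HComp K' (L2 h g) (Id2 K' (Fa f)))"
  unfolding lax_functor_def by (elim conjE) fast
lemma lax_ur: "lax_functor K K' Fo Fa Fc L2 L0 \<Longrightarrow> f \<in> Hom1 K A B \<Longrightarrow>
        VComp K' (L2 f (Id1 K A)) (HComp K' (Id2 K' (Fa f)) (L0 A)) = Id2 K' (Fa f)"
  unfolding lax_functor_def by (elim conjE) fast
lemma lax_ul: "lax_functor K K' Fo Fa Fc L2 L0 \<Longrightarrow> f \<in> Hom1 K A B \<Longrightarrow>
        VComp K' (L2 (Id1 K B) f) (HComp K' (L0 B) (Id2 K' (Fa f))) = Id2 K' (Fa f)"
  unfolding lax_functor_def by (elim conjE) fast

lemma colax_C2: "colax_functor K K' Fo Fa Fc C2 C0 \<Longrightarrow> f \<in> Hom1 K A B \<Longrightarrow> g \<in> Hom1 K B C \<Longrightarrow>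
        C2 g f \<in> Hom2 K' (Fa (Comp1 K g f)) (Comp1 K' (Fa g) (Fa f))"
  unfolding colax_functor_def by (elim conjE) fast
lemma colax_C0: "colax_functor K K' Fo Fa Fc C2 C0 \<Longrightarrow> A \<in> Ob K \<Longrightarrow> C0 A \<in> Hom2 K' (Fa (Id1 K A)) (Id1 K' (Fo A))"
  unfolding colax_functor_def by (elim conjE) fast
lemma colax_nat: "colax_functor K K' Fo Fa Fc C2 C0 \<Longrightarrow> f \<in> Hom1 K A B \<Longrightarrow> g \<in> Hom1 K B C \<Longrightarrow>
        \<alpha> \<in> Hom2 K f f' \<Longrightarrow> \<beta> \<in> Hom2 K g g' \<Longrightarrow>
        VComp K' (HComp K' (Fc \<beta>) (Fc \<alpha>)) (C2 g f) = VComp K' (C2 g' f') (Fc (HComp K \<beta> \<alpha>))"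
  unfolding colax_functor_def by (elim conjE) fast
lemma colax_assoc: "colax_functor K K' Fo Fa Fc C2 C0 \<Longrightarrow> f \<in> Hom1 K A B \<Longrightarrow> g \<in> Hom1 K B C \<Longrightarrow> h \<in> Hom1 K C D \<Longrightarrow>
        VComp K' (HComp K' (Id2 K' (Fa h)) (C2 g f)) (C2 h (Comp1 K g f))
      = VComp K' (HComp K' (C2 h g) (Id2 K' (Fa f))) (C2 (Comp1 K h g) f)"
  unfolding colax_functor_def by (elim conjE) fast
lemma colax_ur: "colax_functor K K' Fo Fa Fc C2 C0 \<Longrightarrow> f \<in> Hom1 K A B \<Longrightarrow>
        VComp K' (HComp K' (Id2 K' (Fa f)) (C0 A)) (C2 f (Id1 K A)) = Id2 K' (Fa f)"
  unfolding colax_functor_def by (elim conjE) fast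
lemma colax_ul: "colax_functor K K' Fo Fa Fc C2 C0 \<Longrightarrow> f \<in> Hom1 K A B \<Longrightarrow>
        VComp K' (HComp K' (C0 B) (Id2 K' (Fa f))) (C2 (Id1 K B) f) = Id2 K' (Fa f)"
  unfolding colax_functor_def by (elim conjE) fast

lemma bl_parts_conj:
  "bilax_functor_yb K c K' c' Fo Fa Fc L2 L0 C2 C0 \<Longrightarrow> two_category K \<and> two_category K' \<and> yb_operator K c \<and>
    lax_functor K K' Fo Fa Fc L2 L0 \<and> colax_functor K K' Fo Fa Fc C2 C0"
  unfolding bilax_functor_yb_def by (elim conjE) (intro conjI; assumption)

lemma bl_parts:
  assumes "bilax_functor_yb K c K' c' Fo Fa Fc L2 L0 C2 C0"
  shows "two_category K" "two_category K'" "yb_operator K c" 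
    "lax_functor K K' Fo Fa Fc L2 L0" "colax_functor K K' Fo Fa Fc C2 C0"
  using bl_parts_conj[OF assms] by simp_all

lemma bl_bilax_all:
  "bilax_functor_yb K c K' c' Fo Fa Fc L2 L0 C2 C0 \<Longrightarrow>
    (\<forall>A B C k h f g. k \<in> Hom1 K A B \<longrightarrow> h \<in> Hom1 K B B \<longrightarrow> f \<in> Hom1 K B B \<longrightarrow> g \<in> Hom1 K B C \<longrightarrow>
        VComp K' (HComp K' (L2 g h) (L2 f k))
          (VComp K' (HComp K' (HComp K' (Id2 K' (Fa g)) (c' (Fa f) (Fa h))) (Id2 K' (Fa k)))
                    (HComp K' (C2 g f) (C2 h k)))
      = VComp K' (C2 (Comp1 K g h) (Comp1 K f k))
          (VComp K' (Fc (HComp K (HComp K (Id2 K g) (c f h)) (Id2 K k)))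
                    (L2 (Comp1 K g f) (Comp1 K h k))))"
  unfolding bilax_functor_yb_def by (elim conjE) assumption

lemma bl_bilax:
  assumes "bilax_functor_yb K c K' c' Fo Fa Fc L2 L0 C2 C0"
    "k \<in> Hom1 K A B" "h \<in> Hom1 K B B" "f \<in> Hom1 K B B" "g \<in> Hom1 K B C"
  shows "VComp K' (HComp K' (L2 g h) (L2 f k))
          (VComp K' (HComp K' (HComp K' (Id2 K' (Fa g)) (c' (Fa f) (Fa h))) (Id2 K' (Fa k)))
                    (HComp K' (C2 g f) (C2 h k)))
      = VComp K' (C2 (Comp1 K g h) (Comp1 K f k))
          (VComp K' (Fc (HComp K (HComp K (Id2 K g) (c f h)) (Id2 K k)))
                    (L2 (Comp1 K g f) (Comp1 K h k)))"
  using bl_bilax_all[OF assms(1), rule_format, OF assms(2-)] .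


theorem corollary4p19:
  fixes K :: "('o,'a,'c) twocat" and c :: "'a \<Rightarrow> 'a \<Rightarrow> 'c"
    and K' :: "('p,'b,'d) twocat" and c' :: "'b \<Rightarrow> 'b \<Rightarrow> 'd"
    and Fo :: "'o \<Rightarrow> 'p" and Fa :: "'a \<Rightarrow> 'b" and Fc :: "'c \<Rightarrow> 'd"
    and L2 :: "'a \<Rightarrow> 'a \<Rightarrow> 'd" and L0 :: "'o \<Rightarrow> 'd"
    and C2 :: "'a \<Rightarrow> 'a \<Rightarrow> 'd" and C0 :: "'o \<Rightarrow> 'd"
    and A :: 'o
  assumes "bilax_functor_yb K c K' c' Fo Fa Fc L2 L0 C2 C0"
    and "A \<in> Ob K"
  shows "(\<forall>x \<in> Hom1 K A A.
            hopf_bimodule K' c' (Fo A) (Fa (Id1 K A))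
              (L2 (Id1 K A) (Id1 K A)) (L0 A) (C2 (Id1 K A) (Id1 K A)) (C0 A)
              (Fa x) (L2 (Id1 K A) x) (L2 x (Id1 K A)) (C2 (Id1 K A) x) (C2 x (Id1 K A)))
       \<and> (\<forall>x \<in> Hom1 K A A. \<forall>y \<in> Hom1 K A A. \<forall>\<alpha> \<in> Hom2 K x y.
            hopf_bimodule_morphism K' (Fa (Id1 K A))
              (Fa x) (L2 (Id1 K A) x) (L2 x (Id1 K A)) (C2 (Id1 K A) x) (C2 x (Id1 K A))
              (Fa y) (L2 (Id1 K A) y) (L2 y (Id1 K A)) (C2 (Id1 K A) y) (C2 y (Id1 K A))
              (Fc \<alpha>))"
proof -
  note P = bl_parts[OF assms(1)]
  note TK = P(1) and TK' = P(2) and Y = P(3) and L = P(4) and C = P(5)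
  have hI: "Id1 K A \<in> Hom1 K A A" using tc_id1[OF TK assms(2)] .
  have II: "Comp1 K (Id1 K A) (Id1 K A) = Id1 K A" using tc_runit[OF TK hI] .
  have hB: "Fa (Id1 K A) \<in> Hom1 K' (Fo A) (Fo A)" using lax_Fa[OF L hI] .
  have cII: "c (Id1 K A) (Id1 K A) = Id2 K (Id1 K A)" using yb_l[OF Y assms(2) hI] .
  have hIdI: "HComp K (Id2 K (Id1 K A)) (Id2 K (Id1 K A)) = Id2 K (Id1 K A)"
    using tc_hid[OF TK hI hI] II by simp
  have FIdI: "Fc (Id2 K (Id1 K A)) = Id2 K' (Fa (Id1 K A))" using lax_Fid[OF L hI] .
  have mem: "hopf_bimodule K' c' (Fo A) (Fa (Id1 K A))
              (L2 (Id1 K A) (Id1 K A)) (L0 A) (C2 (Id1 K A) (Id1 K A)) (C0 A)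
              (Fa x) (L2 (Id1 K A) x) (L2 x (Id1 K A)) (C2 (Id1 K A) x) (C2 x (Id1 K A))"
    if hx: "x \<in> Hom1 K A A" for x
  proof -
    have Ix: "Comp1 K (Id1 K A) x = x" using tc_lunit[OF TK hx] .
    have xI: "Comp1 K x (Id1 K A) = x" using tc_runit[OF TK hx] .
    have cIx: "c (Id1 K A) x = Id2 K x" using yb_l[OF Y assms(2) hx] .
    have cxI: "c x (Id1 K A) = Id2 K x" using yb_r[OF Y assms(2) hx] .
    have hIdx: "HComp K (Id2 K (Id1 K A)) (Id2 K x) = Id2 K x"
      using tc_hid[OF TK hx hI] Ix by simp
    have hxId: "HComp K (Id2 K x) (Id2 K (Id1 K A)) = Id2 K x"
      using tc_hid[OF TK hI hx] xI by simp
    have Fx: "Fc (Id2 K x) = Id2 K' (Fa x)" using lax_Fid[OF L hx] .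
    have al: "L2 (Id1 K A) x \<in> Hom2 K' (Comp1 K' (Fa (Id1 K A)) (Fa x)) (Fa x)"
      using lax_L2[OF L hx hI] Ix by simp
    have ar: "L2 x (Id1 K A) \<in> Hom2 K' (Comp1 K' (Fa x) (Fa (Id1 K A))) (Fa x)"
      using lax_L2[OF L hI hx] xI by simp
    have cl: "C2 (Id1 K A) x \<in> Hom2 K' (Fa x) (Comp1 K' (Fa (Id1 K A)) (Fa x))"
      using colax_C2[OF C hx hI] Ix by simp
    have cr: "C2 x (Id1 K A) \<in> Hom2 K' (Fa x) (Comp1 K' (Fa x) (Fa (Id1 K A)))"
      using colax_C2[OF C hI hx] xI by simp
    have v1: "VComp K' (Id2 K' (Fa x)) (L2 (Id1 K A) x) = L2 (Id1 K A) x"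
      using tc_vl[OF TK' al] .
    have v2: "VComp K' (Id2 K' (Fa x)) (L2 x (Id1 K A)) = L2 x (Id1 K A)"
      using tc_vl[OF TK' ar] .
    have h1: "VComp K' (C2 (Id1 K A) x) (L2 (Id1 K A) x) = VComp K' (HComp K' (L2 (Id1 K A) (Id1 K A)) (L2 (Id1 K A) x))
        (VComp K' (HComp K' (HComp K' (Id2 K' (Fa (Id1 K A))) (c' (Fa (Id1 K A)) (Fa (Id1 K A)))) (Id2 K' (Fa x)))
          (HComp K' (C2 (Id1 K A) (Id1 K A)) (C2 (Id1 K A) x)))"
      using bl_bilax[OF assms(1) hx hI hI hI] by (simp add: Ix II cII hIdI hIdx Fx v1)
    have h2: "VComp K' (C2 x (Id1 K A)) (L2 x (Id1 K A)) = VComp K' (HComp K' (L2 x (Id1 K A)) (L2 (Id1 K A) (Id1 K A)))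
        (VComp K' (HComp K' (HComp K' (Id2 K' (Fa x)) (c' (Fa (Id1 K A)) (Fa (Id1 K A)))) (Id2 K' (Fa (Id1 K A))))
          (HComp K' (C2 x (Id1 K A)) (C2 (Id1 K A) (Id1 K A))))"
      using bl_bilax[OF assms(1) hI hI hI hx] by (simp add: xI II cII hIdI hxId Fx v2)
    have h3: "VComp K' (C2 (Id1 K A) x) (L2 x (Id1 K A)) = VComp K' (HComp K' (L2 (Id1 K A) (Id1 K A)) (L2 x (Id1 K A)))
        (VComp K' (HComp K' (HComp K' (Id2 K' (Fa (Id1 K A))) (c' (Fa x) (Fa (Id1 K A)))) (Id2 K' (Fa (Id1 K A))))
          (HComp K' (C2 (Id1 K A) x) (C2 (Id1 K A) (Id1 K A))))"
      using bl_bilax[OF assms(1) hI hI hx hI] by (simp add: Ix xI II cxI hIdx hxId hIdI FIdI Fx v2 tc_vl[OF TK' ar])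
    have h4: "VComp K' (C2 x (Id1 K A)) (L2 (Id1 K A) x) = VComp K' (HComp K' (L2 (Id1 K A) x) (L2 (Id1 K A) (Id1 K A)))
        (VComp K' (HComp K' (HComp K' (Id2 K' (Fa (Id1 K A))) (c' (Fa (Id1 K A)) (Fa x))) (Id2 K' (Fa (Id1 K A))))
          (HComp K' (C2 (Id1 K A) (Id1 K A)) (C2 x (Id1 K A))))"
      using bl_bilax[OF assms(1) hI hx hI hI] by (simp add: Ix xI II cIx hIdx hxId hIdI Fx v1)
    have m1: "VComp K' (L2 (Id1 K A) x) (HComp K' (L2 (Id1 K A) (Id1 K A)) (Id2 K' (Fa x)))
        = VComp K' (L2 (Id1 K A) x) (HComp K' (Id2 K' (Fa (Id1 K A))) (L2 (Id1 K A) x))"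
      using lax_assoc[OF L hx hI hI] by (simp add: Ix II)
    have m2: "VComp K' (L2 (Id1 K A) x) (HComp K' (L0 A) (Id2 K' (Fa x))) = Id2 K' (Fa x)"
      using lax_ul[OF L hx] .
    have m3: "VComp K' (L2 x (Id1 K A)) (HComp K' (Id2 K' (Fa x)) (L2 (Id1 K A) (Id1 K A)))
        = VComp K' (L2 x (Id1 K A)) (HComp K' (L2 x (Id1 K A)) (Id2 K' (Fa (Id1 K A))))"
      using lax_assoc[OF L hI hI hx] by (simp add: xI II)
    have m4: "VComp K' (L2 x (Id1 K A)) (HComp K' (Id2 K' (Fa x)) (L0 A)) = Id2 K' (Fa x)"
      using lax_ur[OF L hx] .
    have m5: "VComp K' (L2 x (Id1 K A)) (HComp K' (L2 (Id1 K A) x) (Id2 K' (Fa (Id1 K A))))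
        = VComp K' (L2 (Id1 K A) x) (HComp K' (Id2 K' (Fa (Id1 K A))) (L2 x (Id1 K A)))"
      using lax_assoc[OF L hI hx hI] by (simp add: xI Ix)
    have n1: "VComp K' (HComp K' (C2 (Id1 K A) (Id1 K A)) (Id2 K' (Fa x))) (C2 (Id1 K A) x)
        = VComp K' (HComp K' (Id2 K' (Fa (Id1 K A))) (C2 (Id1 K A) x)) (C2 (Id1 K A) x)"
      using colax_assoc[OF C hx hI hI] by (simp add: Ix II)
    have n2: "VComp K' (HComp K' (C0 A) (Id2 K' (Fa x))) (C2 (Id1 K A) x) = Id2 K' (Fa x)"
      using colax_ul[OF C hx] .
    have n3: "VComp K' (HComp K' (Id2 K' (Fa x)) (C2 (Id1 K A) (Id1 K A))) (C2 x (Id1 K A))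
        = VComp K' (HComp K' (C2 x (Id1 K A)) (Id2 K' (Fa (Id1 K A)))) (C2 x (Id1 K A))"
      using colax_assoc[OF C hI hI hx] by (simp add: xI II)
    have n4: "VComp K' (HComp K' (Id2 K' (Fa x)) (C0 A)) (C2 x (Id1 K A)) = Id2 K' (Fa x)"
      using colax_ur[OF C hx] .
    have n5: "VComp K' (HComp K' (C2 (Id1 K A) x) (Id2 K' (Fa (Id1 K A)))) (C2 x (Id1 K A))
        = VComp K' (HComp K' (Id2 K' (Fa (Id1 K A))) (C2 x (Id1 K A))) (C2 (Id1 K A) x)"
      using colax_assoc[OF C hI hx hI] by (simp add: xI Ix)
    show ?thesis unfolding hopf_bimodule_def
      using lax_Fa[OF L hx] al ar cl cr m1 m2 m3 m4 m5 n1 n2 n3 n4 n5 h1 h2 h3 h4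
      by (simp only: simp_thms)
  qed
  have mor: "hopf_bimodule_morphism K' (Fa (Id1 K A))
              (Fa x) (L2 (Id1 K A) x) (L2 x (Id1 K A)) (C2 (Id1 K A) x) (C2 x (Id1 K A))
              (Fa y) (L2 (Id1 K A) y) (L2 y (Id1 K A)) (C2 (Id1 K A) y) (C2 y (Id1 K A))
              (Fc \<alpha>)"
    if hx: "x \<in> Hom1 K A A" and hy: "y \<in> Hom1 K A A" and ha: "\<alpha> \<in> Hom2 K x y" for x y \<alpha>
  proof -
    have Ix: "Comp1 K (Id1 K A) x = x" using tc_lunit[OF TK hx] .
    have xI: "Comp1 K x (Id1 K A) = x" using tc_runit[OF TK hx] .
    have Iy: "Comp1 K (Id1 K A) y = y" using tc_lunit[OF TK hy] .
    have yI: "Comp1 K y (Id1 K A) = y" using tc_runit[OF TK hy] .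
    have hId: "Id2 K (Id1 K A) \<in> Hom2 K (Id1 K A) (Id1 K A)" using tc_id2[OF TK hI] .
    have a1: "HComp K (Id2 K (Id1 K A)) \<alpha> = \<alpha>" using tc_hl[OF TK hx ha] .
    have a2: "HComp K \<alpha> (Id2 K (Id1 K A)) = \<alpha>" using tc_hr[OF TK hx ha] .
    have e1: "VComp K' (Fc \<alpha>) (L2 (Id1 K A) x) = VComp K' (L2 (Id1 K A) y) (HComp K' (Id2 K' (Fa (Id1 K A))) (Fc \<alpha>))"
      using lax_nat[OF L hx hI ha hId] by (simp add: FIdI a1)
    have e2: "VComp K' (Fc \<alpha>) (L2 x (Id1 K A)) = VComp K' (L2 y (Id1 K A)) (HComp K' (Fc \<alpha>) (Id2 K' (Fa (Id1 K A))))"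
      using lax_nat[OF L hI hx hId ha] by (simp add: FIdI a2)
    have e3: "VComp K' (C2 (Id1 K A) y) (Fc \<alpha>) = VComp K' (HComp K' (Id2 K' (Fa (Id1 K A))) (Fc \<alpha>)) (C2 (Id1 K A) x)"
      using colax_nat[OF C hx hI ha hId] by (simp add: FIdI a1)
    have e4: "VComp K' (C2 y (Id1 K A)) (Fc \<alpha>) = VComp K' (HComp K' (Fc \<alpha>) (Id2 K' (Fa (Id1 K A)))) (C2 x (Id1 K A))"
      using colax_nat[OF C hI hx hId ha] by (simp add: FIdI a2)
    show ?thesis unfolding hopf_bimodule_morphism_def
      using lax_Fc[OF L ha] e1 e2 e3 e4 by (simp only: simp_thms)
  qed
  show ?thesis using mem mor by blast
qed

end
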